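(* Let $X$ be an infinite compact metrizable space and $h\colon X\to X$ a minimal homeomorphism. If $F\subset X$ is a closed topologically $h$-small set, then $F$ is thin.
   Context: A closed set $F\subset X$ is topologically $h$-small if there is $m\in\mathbb{Z}_{+}$ such that whenever $d(0),\dots,d(m)$ are $m+1$ distinct integers, $h^{d(0)}(F)\cap\cdots\cap h^{d(m)}(F)=\varnothing$. For $F\subset X$ closed and $U\subset X$ open, write $F\prec U$ if there exist $M\in\mathbb{N}$, open sets $U_0,\dots,U_M\subset X$ and integers $d(0),\dots,d(M)$ such that $F\subset\bigcup_{j=0}^M U_j$, $h^{d(j)}(U_j)\subset U$ for all $j$, and the sets $h^{d(j)}(U_j)$, $0\le j\le M$, are pairwise disjoint. A closed set $F$ is thin if $F\prec U$ for every non-empty open $U\subset X$. *)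

theory Defs
  imports "HOL-Analysis.Analysis"
begin

definition hpow :: "('a \<Rightarrow> 'a) \<Rightarrow> int \<Rightarrow> 'a \<Rightarrow> 'a" where
  "hpow h d = (if 0 \<le> d then h ^^ nat d else inv h ^^ nat (- d))"

definition minimal_homeo :: "('a::topological_space \<Rightarrow> 'a) \<Rightarrow> bool" where
  "minimal_homeo h \<longleftrightarrow>
     (\<exists>g. homeomorphism UNIV UNIV h g) \<and>
     (\<forall>S. closed S \<and> h ` S = S \<longrightarrow> S = {} \<or> S = UNIV)"

definition top_small :: "('a \<Rightarrow> 'a) \<Rightarrow> 'a set \<Rightarrow> bool" where
  "top_small h F \<longleftrightarrow>
     (\<exists>m::nat. \<forall>d::nat \<Rightarrow> int. inj_on d {0..m} \<longrightarrow>
        (\<Inter>j\<in>{0..m}. hpow h (d j) ` F) = {})"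

definition prec :: "('a::topological_space \<Rightarrow> 'a) \<Rightarrow> 'a set \<Rightarrow> 'a set \<Rightarrow> bool" where
  "prec h F U \<longleftrightarrow>
     (\<exists>(M::nat) (V::nat \<Rightarrow> 'a set) (d::nat \<Rightarrow> int).
        (\<forall>j\<le>M. open (V j)) \<and>
        F \<subseteq> (\<Union>j\<le>M. V j) \<and>
        (\<forall>j\<le>M. hpow h (d j) ` V j \<subseteq> U) \<and>
        (\<forall>i\<le>M. \<forall>j\<le>M. i \<noteq> j \<longrightarrow> hpow h (d i) ` V i \<inter> hpow h (d j) ` V j = {}))"

definition thin :: "('a::topological_space \<Rightarrow> 'a) \<Rightarrow> 'a set \<Rightarrow> bool" where
  "thin h F \<longleftrightarrow> closed F \<and> (\<forall>U. open U \<and> U \<noteq> {} \<longrightarrow> prec h F U)"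

end

theory Submission
  imports Defs
begin


lemma hpow_succ:
  assumes "bij h" shows "hpow h (d+1) x = h (hpow h d x)"
proof (cases "0 \<le> d")
  case True
  then have "nat (d+1) = Suc (nat d)" by simp
  then show ?thesis using True by (simp add: hpow_def)
next
  case False
  show ?thesis
  proof (cases "d = -1")
    case True
    then show ?thesis using assms by (simp add: hpow_def bij_def surj_f_inv_f)
  next
    case False2: False
    then have "nat (-d) = Suc (nat (-(d+1)))" using False by simp
    then show ?thesis using False False2 assms by (simp add: hpow_def bij_def surj_f_inv_f)
  qed
qed

lemma hpow_pred:
  assumes "bij h" shows "hpow h (d-1) x = inv h (hpow h d x)"
proof -
  have "hpow h d x = h (hpow h (d-1) x)" using hpow_succ[OF assms, of "d-1"] by simp
  then show ?thesis using assms by (simp add: bij_def inv_f_f)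
qed

lemma hpow_zero[simp]: "hpow h 0 x = x" by (simp add: hpow_def)

lemma hpow_add:
  assumes "bij h" shows "hpow h (a+b) x = hpow h a (hpow h b x)"
proof (induction a rule: int_induct[where k=0])
  case base then show ?case by simp
next
  case (step1 i)
  have "hpow h (i+1+b) x = hpow h ((i+b)+1) x" by (simp add: algebra_simps)
  also have "\<dots> = h (hpow h (i+b) x)" by (rule hpow_succ[OF assms])
  also have "\<dots> = hpow h (i+1) (hpow h b x)" using step1 hpow_succ[OF assms] by simp
  finally show ?case .
next
  case (step2 i)
  have "hpow h (i-1+b) x = hpow h ((i+b)-1) x" by (simp add: algebra_simps)
  also have "\<dots> = inv h (hpow h (i+b) x)" by (rule hpow_pred[OF assms])
  also have "\<dots> = hpow h (i-1) (hpow h b x)" using step2 hpow_pred[OF assms] by simp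
  finally show ?case .
qed

lemma hpow_neg_cancel:
  assumes "bij h" shows "hpow h (-d) (hpow h d x) = x" "hpow h d (hpow h (-d) x) = x"
  using hpow_add[OF assms, of "-d" d x] hpow_add[OF assms, of d "-d" x] by simp_all

lemma hpow_image:
  assumes "bij h" shows "hpow h d ` S = hpow h (-d) -` S"
  using hpow_neg_cancel[OF assms] by (auto, metis image_eqI)

lemma hpow_cont:
  assumes "homeomorphism UNIV UNIV h g"
  shows "continuous_on UNIV (hpow h d)"
proof -
  have ch: "continuous_on UNIV h" and cg: "continuous_on UNIV g"
    using assms by (auto simp: homeomorphism_def)
  have bij: "bij h" using assms unfolding homeomorphism_def bij_def inj_def
    by (metis UNIV_I image_eqI surj_def)
  have ig: "inv h = g"
  proof
    fix y show "inv h y = g y" using assms bij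
      by (metis UNIV_I bij_inv_eq_iff homeomorphism_apply2)
  qed
  have fp: "continuous_on UNIV (f ^^ n)" if "continuous_on UNIV f" for f :: "'a \<Rightarrow> 'a" and n
    by (induction n) (auto intro: continuous_on_compose2[OF that] simp: continuous_on_id)
  show ?thesis unfolding hpow_def using fp[OF ch] fp[OF cg] ig by auto
qed



lemma mh_bij: "minimal_homeo h \<Longrightarrow> bij h"
  unfolding minimal_homeo_def homeomorphism_def bij_def inj_def
  by (metis UNIV_I image_eqI surj_def)

lemma mh_cont: "minimal_homeo h \<Longrightarrow> continuous_on UNIV (hpow h d)"
  unfolding minimal_homeo_def using hpow_cont by blast

lemma hpow_open_vimage: "minimal_homeo h \<Longrightarrow> open W \<Longrightarrow> open (hpow h d -` W)"
  using mh_cont[of h d] continuous_on_open_vimage[of UNIV "hpow h d"] by auto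

lemma hpow_closed_vimage: "minimal_homeo h \<Longrightarrow> closed W \<Longrightarrow> closed (hpow h d -` W)"
  using mh_cont[of h d] continuous_on_closed_vimage[of UNIV "hpow h d"] by auto

lemma hpow_open_image: "minimal_homeo h \<Longrightarrow> open W \<Longrightarrow> open (hpow h d ` W)"
proof -
  assume a: "minimal_homeo h" "open W"
  have "hpow h d ` W = hpow h (-d) -` W" by (rule hpow_image[OF mh_bij[OF a(1)]])
  then show ?thesis using hpow_open_vimage[OF a] by simp
qed

lemma hpow_closed_image: "minimal_homeo h \<Longrightarrow> closed W \<Longrightarrow> closed (hpow h d ` W)"
proof -
  assume a: "minimal_homeo h" "closed W"
  have "hpow h d ` W = hpow h (-d) -` W" by (rule hpow_image[OF mh_bij[OF a(1)]])
  then show ?thesis using hpow_closed_vimage[OF a] by simp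
qed

lemma hpow_one: "hpow h 1 x = h x" by (simp add: hpow_def)

lemma mh_cover:
  fixes h :: "'a::metric_space \<Rightarrow> 'a"
  assumes mh: "minimal_homeo h" and cp: "compact (UNIV::'a set)" and W: "open W" "W \<noteq> {}"
  shows "\<exists>N::nat. \<forall>x. \<exists>n. \<bar>n\<bar> \<le> int N \<and> hpow h n x \<in> W"
proof -
  have bij: "bij h" using mh_bij[OF mh] .
  define S where "S = {x. \<forall>n. hpow h n x \<notin> W}"
  have S_eq: "S = - (\<Union>n. hpow h n -` W)" unfolding S_def by auto
  have "closed S" unfolding S_eq using hpow_open_vimage[OF mh W(1)] by (intro closed_Compl open_UN) auto
  have shift: "hpow h n (h x) = hpow h (n+1) x" for n x
    using hpow_add[OF bij, of n 1 x] hpow_one[of h x] by simp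
  have hS: "h x \<in> S \<longleftrightarrow> x \<in> S" for x
  proof
    assume a: "h x \<in> S" show "x \<in> S" unfolding S_def mem_Collect_eq
    proof (intro allI)
      fix n have "hpow h (n - 1) (h x) \<notin> W" using a unfolding S_def by simp
      then show "hpow h n x \<notin> W" using shift[of "n-1" x] by simp
    qed
  next
    assume "x \<in> S" then show "h x \<in> S" unfolding S_def using shift by simp
  qed
  have "h ` S = S"
  proof
    show "h ` S \<subseteq> S" using hS by auto
    show "S \<subseteq> h ` S"
    proof
      fix y assume "y \<in> S"
      obtain x where "y = h x" using bij by (metis bij_def surj_def)
      then show "y \<in> h ` S" using hS \<open>y \<in> S\<close> by auto
    qed
  qed
  moreover have "S \<noteq> UNIV"
  proof -
    obtain w where "w \<in> W" using W by auto
    then have "w \<notin> S" unfolding S_def by (auto intro!: exI[of _ 0])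
    then show ?thesis by auto
  qed
  moreover have mS: "\<forall>S. closed S \<and> h ` S = S \<longrightarrow> S = {} \<or> S = UNIV"
    using mh unfolding minimal_homeo_def by (rule conjunct2)
  ultimately have "S = {}" using \<open>closed S\<close> by blast
  then have cov: "UNIV \<subseteq> (\<Union>n\<in>UNIV. hpow h n -` W)" unfolding S_def by auto
  have op: "\<And>T. T \<in> UNIV \<Longrightarrow> open (hpow h T -` W)" using hpow_open_vimage[OF mh W(1)] by blast
  obtain D where D0: "D \<subseteq> UNIV" and D: "finite D" "UNIV \<subseteq> (\<Union>n\<in>D. hpow h n -` W)"
    by (rule compactE_image[OF cp op cov])
  define N where "N = nat (Max (insert 0 (abs ` D)))"
  have "\<forall>n\<in>D. \<bar>n\<bar> \<le> int N"
  proof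
    fix n assume "n \<in> D"
    then have "\<bar>n\<bar> \<le> Max (insert 0 (abs ` D))" using D(1) by (intro Max_ge) auto
    then show "\<bar>n\<bar> \<le> int N" unfolding N_def by linarith
  qed
  then show ?thesis using D(2) by blast
qed

lemma open_infinite:
  fixes h :: "'a::metric_space \<Rightarrow> 'a" and U :: "'a set"
  assumes mh: "minimal_homeo h" and cp: "compact (UNIV::'a set)" and inf: "infinite (UNIV::'a set)"
    and U: "open U" "U \<noteq> {}"
  shows "infinite U"
proof
  assume fin: "finite U"
  obtain x where x: "x \<in> U" using U by auto
  have "finite (U - {x})" using fin by simp
  then have "closed (U - {x})" by (rule finite_imp_closed)
  then have "open (U \<inter> - (U - {x}))" by (rule open_Int[OF U(1) open_Compl])
  moreover have "U \<inter> - (U - {x}) = {x}" using x by auto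
  ultimately have ox: "open {x}" by simp
  obtain N where N: "\<forall>y. \<exists>n. \<bar>n\<bar> \<le> int N \<and> hpow h n y \<in> {x}"
    using mh_cover[OF mh cp ox] by auto
  have "UNIV \<subseteq> (\<lambda>n. hpow h (-n) x) ` {-int N..int N}"
  proof
    fix y obtain n where "\<bar>n\<bar> \<le> int N" "hpow h n y = x" using N by auto
    then show "y \<in> (\<lambda>n. hpow h (-n) x) ` {-int N..int N}"
      using hpow_neg_cancel(1)[OF mh_bij[OF mh], of n y] by (auto intro!: image_eqI[where x=n])
  qed
  then show False using inf finite_subset by blast
qed

lemma disjoint_opens:
  fixes h :: "'a::metric_space \<Rightarrow> 'a"
  assumes mh: "minimal_homeo h" and cp: "compact (UNIV::'a set)" and inf: "infinite (UNIV::'a set)"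
  shows "open U \<Longrightarrow> U \<noteq> {} \<Longrightarrow> \<exists>V::nat\<Rightarrow>'a set. (\<forall>c<K. open (V c) \<and> V c \<noteq> {} \<and> V c \<subseteq> U)
     \<and> (\<forall>c<K. \<forall>c'<K. c \<noteq> c' \<longrightarrow> V c \<inter> V c' = {})"
proof (induction K arbitrary: U)
  case 0 then show ?case by auto
next
  case (Suc K)
  have "infinite U" using open_infinite[OF mh cp inf Suc.prems] .
  then obtain x where x: "x \<in> U" using infinite_imp_nonempty by blast
  have "infinite (U - {x})" using \<open>infinite U\<close> by simp
  then obtain y where y: "y \<in> U - {x}" using infinite_imp_nonempty by blast
  have xy: "x \<in> U" "y \<in> U" "x \<noteq> y" using x y by auto
  define r where "r = dist x y / 2"
  have r: "r > 0" using xy unfolding r_def by simp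
  define A where "A = U \<inter> ball x r"
  define B where "B = U \<inter> ball y r"
  have AB: "A \<inter> B = {}" unfolding A_def B_def r_def
  proof (rule ccontr)
    assume "U \<inter> ball x (dist x y / 2) \<inter> (U \<inter> ball y (dist x y / 2)) \<noteq> {}"
    then obtain z where "dist x z < dist x y / 2" "dist y z < dist x y / 2" by auto
    moreover have "dist x y \<le> dist x z + dist y z" by (rule dist_triangle2)
    ultimately show False by linarith
  qed
  have oA: "open A" "A \<noteq> {}" "A \<subseteq> U" unfolding A_def using Suc.prems r xy by auto
  have oB: "open B" "B \<noteq> {}" "B \<subseteq> U" unfolding B_def using Suc.prems r xy by auto
  obtain V where V: "\<forall>c<K. open (V c) \<and> V c \<noteq> {} \<and> V c \<subseteq> B"
     "\<forall>c<K. \<forall>c'<K. c \<noteq> c' \<longrightarrow> V c \<inter> V c' = {}" using Suc.IH[OF oB(1,2)] by blast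
  define V' where "V' = (\<lambda>c. if c = K then A else V c)"
  have VU: "\<forall>c<K. V c \<subseteq> U" using V oB by blast
  have "\<forall>c<Suc K. open (V' c) \<and> V' c \<noteq> {} \<and> V' c \<subseteq> U"
    unfolding V'_def using V oA VU by (auto simp: less_Suc_eq)
  moreover have "\<forall>c<Suc K. \<forall>c'<Suc K. c \<noteq> c' \<longrightarrow> V' c \<inter> V' c' = {}"
  proof (intro allI impI)
    fix c c' assume c: "c < Suc K" "c' < Suc K" "c \<noteq> c'"
    have VB: "\<forall>c<K. V c \<subseteq> B" using V by blast
    show "V' c \<inter> V' c' = {}"
    proof (cases "c = K")
      case True
      then have "c' < K" using c by auto
      then have "V' c' \<subseteq> B" unfolding V'_def using VB c by auto
      moreover have "V' c = A" unfolding V'_def using True by simp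
      ultimately show ?thesis using AB by blast
    next
      case False
      then have cK: "c < K" using c by auto
      show ?thesis
      proof (cases "c' = K")
        case True then show ?thesis unfolding V'_def using False cK VB AB by auto
      next
        case False2: False
        then have "c' < K" using c by auto
        then show ?thesis unfolding V'_def using False False2 cK c V(2) by auto
      qed
    qed
  qed
  ultimately show ?case by blast
qed



lemma sep_open:
  fixes h :: "'a::metric_space \<Rightarrow> 'a"
  assumes mh: "minimal_homeo h" and R: "compact R"
    and dis: "\<forall>j\<in>{1..N}. R \<inter> hpow h (int j) ` R = {}"
  shows "\<exists>V. open V \<and> R \<subseteq> V \<and> (\<forall>j\<in>{1..N}. V \<inter> hpow h (int j) ` V = {})"
proof -
  have one: "\<exists>W. open W \<and> R \<subseteq> W \<and> W \<inter> hpow h (int j) ` W = {}" if j: "j \<in> {1..N}" for j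
  proof -
    have cR: "closed R" using R by (rule compact_imp_closed)
    have cgR: "closed (hpow h (int j) ` R)" using hpow_closed_image[OF mh cR] .
    obtain A B where AB: "open A" "open B" "R \<subseteq> A" "hpow h (int j) ` R \<subseteq> B" "A \<inter> B = {}"
      using t4_space[OF cR cgR] dis j by blast
    define W where "W = A \<inter> hpow h (int j) -` B"
    have "open W" unfolding W_def using AB hpow_open_vimage[OF mh AB(2)] by auto
    moreover have "R \<subseteq> W" unfolding W_def using AB by auto
    moreover have "W \<inter> hpow h (int j) ` W = {}" unfolding W_def using AB by auto
    ultimately show ?thesis by blast
  qed
  then obtain Wf where Wf: "\<forall>j\<in>{1..N}. open (Wf j) \<and> R \<subseteq> Wf j \<and> Wf j \<inter> hpow h (int j) ` Wf j = {}"
    by metis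
  define V where "V = (\<Inter>j\<in>{1..N}. Wf j)"
  have "open V" unfolding V_def using Wf by (intro open_INT) auto
  moreover have "R \<subseteq> V" unfolding V_def using Wf by auto
  moreover have "\<forall>j\<in>{1..N}. V \<inter> hpow h (int j) ` V = {}"
  proof
    fix j assume j: "j \<in> {1..N}"
    have "V \<subseteq> Wf j" unfolding V_def using j by auto
    then show "V \<inter> hpow h (int j) ` V = {}" using Wf j by blast
  qed
  ultimately show ?thesis by blast
qed

lemma color:
  fixes h :: "'a::metric_space \<Rightarrow> 'a"
  assumes mh: "minimal_homeo h" and cp: "compact (UNIV::'a set)"
  shows "closed F \<Longrightarrow> \<forall>x. card {j\<in>{0..S}. hpow h (int j) x \<in> F} \<le> k \<Longrightarrow> k * N \<le> S \<Longrightarrow>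
    \<exists>V::nat\<Rightarrow>'a set. (\<forall>c<k. open (V c) \<and> (\<forall>j\<in>{1..N}. V c \<inter> hpow h (int j) ` V c = {}))
        \<and> F \<subseteq> (\<Union>c<k. V c)"
proof (induction k arbitrary: F S)
  case 0
  have "F = {}"
  proof (rule ccontr)
    assume "F \<noteq> {}" then obtain x where x: "x \<in> F" by auto
    have "0 \<in> {j\<in>{0..S}. hpow h (int j) x \<in> F}" using x by simp
    moreover have "finite {j\<in>{0..S}. hpow h (int j) x \<in> F}" by simp
    ultimately have "card {j\<in>{0..S}. hpow h (int j) x \<in> F} \<noteq> 0" by (metis card_0_eq empty_iff)
    then show False using "0.prems"(2) by (metis le_zero_eq)
  qed
  then show ?case by auto
next
  case (Suc k)
  have bij: "bij h" using mh_bij[OF mh] .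
  define Z where "Z = {x\<in>F. \<exists>j\<in>{1..N}. hpow h (- int j) x \<in> F}"
  have Zeq: "Z = F \<inter> (\<Union>j\<in>{1..N}. hpow h (- int j) -` F)" unfolding Z_def by auto
  have cZ: "closed Z" unfolding Zeq using Suc.prems(1) hpow_closed_vimage[OF mh Suc.prems(1)]
    by (intro closed_Int closed_UN) auto
  have SN: "k * N \<le> S - N" "N \<le> S" using Suc.prems(3) by auto
  have bnd: "\<forall>x. card {j\<in>{0..S - N}. hpow h (int j) x \<in> Z} \<le> k"
  proof
    fix x
    define T where "T = {j\<in>{0..S - N}. hpow h (int j) x \<in> Z}"
    have fT: "finite T" unfolding T_def by simp
    have "card T \<le> k"
    proof (cases "T = {}")
      case True then show ?thesis by simp
    next
      case False
      define j0 where "j0 = Min T"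
      have j0T: "j0 \<in> T" unfolding j0_def using fT False by simp
      have j0min: "\<And>t. t \<in> T \<Longrightarrow> j0 \<le> t" unfolding j0_def using fT by simp
      have "hpow h (int j0) x \<in> Z" using j0T unfolding T_def by simp
      then obtain i where i: "i \<in> {1..N}" "hpow h (- int i) (hpow h (int j0) x) \<in> F"
        unfolding Z_def by blast
      define x' where "x' = hpow h (- int N) x"
      define T' where "T' = {j\<in>{0..S}. hpow h (int j) x' \<in> F}"
      have x'e: "hpow h (int (j + N)) x' = hpow h (int j) x" for j
        unfolding x'_def using hpow_add[OF bij, of "int (j+N)" "- int N" x] by simp
      have sub: "(\<lambda>j. j + N) ` T \<subseteq> T'"
      proof
        fix y assume "y \<in> (\<lambda>j. j + N) ` T"
        then obtain j where j: "j \<in> T" "y = j + N" by auto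
        then show "y \<in> T'" unfolding T'_def T_def Z_def using x'e SN by auto
      qed
      have new: "j0 + N - i \<in> T'"
      proof -
        have x'g: "hpow h (int mm) x' = hpow h (int mm - int N) x" for mm
          unfolding x'_def using hpow_add[OF bij, of "int mm" "- int N" x] by simp
        have "int (j0 + N - i) = int j0 - int i + int N" using i by auto
        then have "hpow h (int (j0 + N - i)) x' = hpow h (int j0 - int i) x"
          using x'g[of "j0 + N - i"] by simp
        then have "hpow h (int (j0 + N - i)) x' = hpow h (- int i) (hpow h (int j0) x)"
          using hpow_add[OF bij, of "- int i" "int j0" x] by simp
        then show ?thesis unfolding T'_def using i j0T SN unfolding T_def by auto
      qed
      have notin: "j0 + N - i \<notin> (\<lambda>j. j + N) ` T"
      proof
        assume "j0 + N - i \<in> (\<lambda>j. j + N) ` T"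
        then obtain t where "t \<in> T" "j0 + N - i = t + N" by auto
        then show False using j0min[of t] i by auto
      qed
      have "card (insert (j0 + N - i) ((\<lambda>j. j + N) ` T)) \<le> card T'"
        using sub new by (intro card_mono) (auto simp: T'_def)
      moreover have "card (insert (j0 + N - i) ((\<lambda>j. j + N) ` T)) = Suc (card T)"
        using notin fT by (simp add: card_image)
      moreover have "card T' \<le> Suc k" unfolding T'_def using Suc.prems(2) by blast
      ultimately show ?thesis by simp
    qed
    then show "card {j\<in>{0..S - N}. hpow h (int j) x \<in> Z} \<le> k" unfolding T_def .
  qed
  obtain V where V: "\<forall>c<k. open (V c) \<and> (\<forall>j\<in>{1..N}. V c \<inter> hpow h (int j) ` V c = {})"
     "Z \<subseteq> (\<Union>c<k. V c)"
    using Suc.IH[OF cZ bnd SN(1)] by blast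
  define R where "R = F - (\<Union>c<k. V c)"
  have "closed R" unfolding R_def using Suc.prems(1) V(1) by (intro closed_Diff open_UN) auto
  then have cR: "compact R" using compact_Int_closed[OF cp] by (metis inf_top_left)
  have dR: "\<forall>j\<in>{1..N}. R \<inter> hpow h (int j) ` R = {}"
  proof (intro ballI equalityI subsetI)
    fix j y assume j: "j \<in> {1..N}" and y: "y \<in> R \<inter> hpow h (int j) ` R"
    then obtain z where z: "z \<in> R" "y = hpow h (int j) z" by auto
    have "hpow h (- int j) y = z" using z hpow_neg_cancel(1)[OF bij] by simp
    moreover have "y \<in> F" "z \<in> F" using y z unfolding R_def by auto
    ultimately have "y \<in> Z" unfolding Z_def using j by auto
    then show "y \<in> {}" using V(2) y unfolding R_def by auto
  qed simp
  obtain V0 where V0: "open V0" "R \<subseteq> V0" "\<forall>j\<in>{1..N}. V0 \<inter> hpow h (int j) ` V0 = {}"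
    using sep_open[OF mh cR dR] by blast
  define V' where "V' = (\<lambda>c. if c = k then V0 else V c)"
  have "\<forall>c<Suc k. open (V' c) \<and> (\<forall>j\<in>{1..N}. V' c \<inter> hpow h (int j) ` V' c = {})"
    unfolding V'_def using V(1) V0 by (auto simp: less_Suc_eq)
  moreover have "F \<subseteq> (\<Union>c<Suc k. V' c)"
  proof
    fix x assume x: "x \<in> F"
    show "x \<in> (\<Union>c<Suc k. V' c)"
    proof (cases "x \<in> (\<Union>c<k. V c)")
      case True then obtain c where "c < k" "x \<in> V c" by auto
      then show ?thesis unfolding V'_def by (intro UN_I[of c]) auto
    next
      case False then have "x \<in> V0" using x V0(2) unfolding R_def by auto
      then show ?thesis unfolding V'_def by (intro UN_I[of k]) auto
    qed
  qed
  ultimately show ?case by blast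
qed

lemma small_pointwise:
  assumes bij: "bij h" and ts: "\<forall>d::nat \<Rightarrow> int. inj_on d {0..m} \<longrightarrow> (\<Inter>j\<in>{0..m}. hpow h (d j) ` F) = {}"
  shows "card {j\<in>{0..S}. hpow h (int j) x \<in> F} \<le> m"
proof (rule ccontr)
  define T where "T = {j\<in>{0..S}. hpow h (int j) x \<in> F}"
  assume "\<not> card {j\<in>{0..S}. hpow h (int j) x \<in> F} \<le> m"
  then have "Suc m \<le> card T" unfolding T_def by simp
  then obtain T' where T': "T' \<subseteq> T" "card T' = Suc m" "finite T'" by (rule obtain_subset_with_card_n)
  obtain f where f: "bij_betw f {0..<card T'} T'" using ex_bij_betw_nat_finite[OF T'(3)] by blast
  have e: "{0..<card T'} = {0..m}" using T'(2) by auto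
  define d where "d = (\<lambda>i. - int (f i))"
  have "inj_on d {0..m}" using f e unfolding d_def bij_betw_def inj_on_def by auto
  moreover have "x \<in> (\<Inter>j\<in>{0..m}. hpow h (d j) ` F)"
  proof
    fix i assume i: "i \<in> {0..m}"
    then have "f i \<in> T" using f e T'(1) unfolding bij_betw_def by auto
    then have "hpow h (int (f i)) x \<in> F" unfolding T_def by simp
    moreover have "hpow h (d i) (hpow h (int (f i)) x) = x"
      unfolding d_def using hpow_neg_cancel(1)[OF bij] by simp
    ultimately show "x \<in> hpow h (d i) ` F" by (metis image_eqI)
  qed
  ultimately show False using ts by auto
qed



lemma sep_disj:
  assumes bij: "bij h" and V: "\<forall>j\<in>{1..K}. V \<inter> hpow h (int j) ` V = {}"
    and ne: "n1 \<noteq> n2" and bd: "\<bar>n1 - n2\<bar> \<le> int K"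
  shows "hpow h n1 ` V \<inter> hpow h n2 ` V = {}"
proof (rule ccontr)
  assume "hpow h n1 ` V \<inter> hpow h n2 ` V \<noteq> {}"
  then obtain a b where ab: "a \<in> V" "b \<in> V" "hpow h n1 a = hpow h n2 b" by auto
  have a: "a = hpow h (n2 - n1) b"
  proof -
    have "a = hpow h (- n1) (hpow h n1 a)" using hpow_neg_cancel(1)[OF bij] by simp
    also have "\<dots> = hpow h (- n1) (hpow h n2 b)" using ab by simp
    also have "\<dots> = hpow h (n2 - n1) b" using hpow_add[OF bij, of "- n1" n2 b] by simp
    finally show ?thesis .
  qed
  have b: "b = hpow h (n1 - n2) a"
  proof -
    have "b = hpow h (- n2) (hpow h n2 b)" using hpow_neg_cancel(1)[OF bij] by simp
    also have "\<dots> = hpow h (- n2) (hpow h n1 a)" using ab by simp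
    also have "\<dots> = hpow h (n1 - n2) a" using hpow_add[OF bij, of "- n2" n1 a] by simp
    finally show ?thesis .
  qed
  show False
  proof (cases "n1 < n2")
    case True
    define j where "j = nat (n2 - n1)"
    have j: "j \<in> {1..K}" "int j = n2 - n1" unfolding j_def using True bd by auto
    have "a \<in> V \<inter> hpow h (int j) ` V" using a ab j by auto
    then show False using V j by blast
  next
    case False
    define j where "j = nat (n1 - n2)"
    have j: "j \<in> {1..K}" "int j = n1 - n2" unfolding j_def using False ne bd by auto
    have "b \<in> V \<inter> hpow h (int j) ` V" using b ab j by auto
    then show False using V j by blast
  qed
qed

lemma divmod_aux:
  fixes c r L :: nat
  assumes "r < L"
  shows "(c * L + r) div L = c" "(c * L + r) mod L = r"
  using assms by auto

theorem proposition3p11: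
  fixes h :: "'a::metric_space \<Rightarrow> 'a" and F :: "'a set"
  assumes "infinite (UNIV :: 'a set)"
    and "compact (UNIV :: 'a set)"
    and "minimal_homeo h"
    and "closed F"
    and "top_small h F"
  shows "thin h F"
proof -
  have bij: "bij h" using mh_bij[OF assms(3)] .
  obtain m where ts: "\<forall>d::nat\<Rightarrow>int. inj_on d {0..m} \<longrightarrow> (\<Inter>j\<in>{0..m}. hpow h (d j) ` F) = {}"
    using assms(5) unfolding top_small_def by blast
  have pw: "\<forall>x. card {j\<in>{0..S}. hpow h (int j) x \<in> F} \<le> m" for S
    using small_pointwise[OF bij ts] by blast
  show ?thesis unfolding thin_def
  proof (intro conjI allI impI)
    show "closed F" by fact
    fix U :: "'a set" assume U: "open U \<and> U \<noteq> {}"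
    have "open U" "U \<noteq> {}" using U by auto
    from disjoint_opens[OF assms(3) assms(2) assms(1) this, of m]
    obtain Uc where Uc: "\<forall>c<m. open (Uc c) \<and> Uc c \<noteq> {} \<and> Uc c \<subseteq> U"
        "\<forall>c<m. \<forall>c'<m. c \<noteq> c' \<longrightarrow> Uc c \<inter> Uc c' = {}"
      by (elim exE conjE)
    have "\<forall>c. \<exists>N::nat. c < m \<longrightarrow> (\<forall>x. \<exists>n. \<bar>n\<bar> \<le> int N \<and> hpow h n x \<in> Uc c)"
    proof
      fix c show "\<exists>N::nat. c < m \<longrightarrow> (\<forall>x. \<exists>n. \<bar>n\<bar> \<le> int N \<and> hpow h n x \<in> Uc c)"
      proof (cases "c < m")
        case True
        then have "open (Uc c)" "Uc c \<noteq> {}" using Uc(1) by auto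
        from mh_cover[OF assms(3) assms(2) this] show ?thesis by auto
      qed auto
    qed
    from choice[OF this] obtain Nf where Nf0: "\<forall>c. c < m \<longrightarrow> (\<forall>x. \<exists>n. \<bar>n\<bar> \<le> int (Nf c) \<and> hpow h n x \<in> Uc c)"
      by blast
    then have Nf: "\<forall>c<m. \<forall>x. \<exists>n. \<bar>n\<bar> \<le> int (Nf c) \<and> hpow h n x \<in> Uc c" by simp
    define N where "N = (\<Sum>c<m. Nf c)"
    have NN: "\<forall>c<m. \<forall>x. \<exists>n. \<bar>n\<bar> \<le> int N \<and> hpow h n x \<in> Uc c"
    proof (intro allI impI)
      fix c x assume c: "c < m"
      obtain n where n: "\<bar>n\<bar> \<le> int (Nf c)" "hpow h n x \<in> Uc c" using Nf c by blast
      have "Nf c \<le> N" unfolding N_def using c by (intro member_le_sum) auto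
      then show "\<exists>n. \<bar>n\<bar> \<le> int N \<and> hpow h n x \<in> Uc c" using n by (intro exI[of _ n]) auto
    qed
    have "\<exists>V::nat\<Rightarrow>'a set. (\<forall>c<m. open (V c) \<and> (\<forall>j\<in>{1..2*N}. V c \<inter> hpow h (int j) ` V c = {}))
        \<and> F \<subseteq> (\<Union>c<m. V c)"
      by (rule color[OF assms(3) assms(2) assms(4) pw[of "m * (2 * N)"]]) simp
    then obtain V where V: "\<forall>c<m. open (V c) \<and> (\<forall>j\<in>{1..2*N}. V c \<inter> hpow h (int j) ` V c = {})"
        "F \<subseteq> (\<Union>c<m. V c)" by blast
    define L where "L = 2 * N + 1"
    define nj where "nj = (\<lambda>j. int (j mod L) - int N)"
    define P where "P = (\<lambda>j. if j div L < m then V (j div L) \<inter> hpow h (nj j) -` Uc (j div L) else {})"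
    define M where "M = m * L - 1"
    have L0: "0 < L" unfolding L_def by simp
    have njb: "\<bar>nj j\<bar> \<le> int N" "\<bar>nj i - nj j\<bar> \<le> int (2*N)" for i j
    proof -
      have "i mod L < L" "j mod L < L" using L0 by auto
      then have "int (i mod L) \<le> 2 * int N" "int (j mod L) \<le> 2 * int N" unfolding L_def by linarith+
      then show "\<bar>nj j\<bar> \<le> int N" "\<bar>nj i - nj j\<bar> \<le> int (2*N)" unfolding nj_def abs_le_iff by auto
    qed
    show "prec h F U" unfolding prec_def
    proof (intro exI conjI)
      show "\<forall>j\<le>M. open (P j)"
        unfolding P_def using V(1) hpow_open_vimage[OF assms(3)] Uc(1) by (auto intro!: open_Int)
      show "\<forall>j\<le>M. hpow h (nj j) ` P j \<subseteq> U"
        unfolding P_def using Uc(1) by auto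
      show "F \<subseteq> (\<Union>j\<le>M. P j)"
      proof
        fix x assume x: "x \<in> F"
        then obtain c where c: "c < m" "x \<in> V c" using V(2) by auto
        obtain n where n: "\<bar>n\<bar> \<le> int N" "hpow h n x \<in> Uc c" using NN c by blast
        define r where "r = nat (n + int N)"
        have r: "r < L" "int r = n + int N" unfolding r_def L_def using n by auto
        define j where "j = c * L + r"
        have jd: "j div L = c" "j mod L = r" unfolding j_def using divmod_aux[OF r(1)] by auto
        have njj: "nj j = n" unfolding nj_def using jd r by simp
        have "j < m * L"
        proof -
          have "j < c * L + L" unfolding j_def using r by simp
          also have "\<dots> = (c + 1) * L" by simp
          also have "\<dots> \<le> m * L" using c by (intro mult_right_mono) auto
          finally show ?thesis .
        qed
        then have "j \<le> M" unfolding M_def by simp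
        moreover have "x \<in> P j" unfolding P_def using jd njj c n by auto
        ultimately show "x \<in> (\<Union>j\<le>M. P j)" by blast
      qed
      show "\<forall>i\<le>M. \<forall>j\<le>M. i \<noteq> j \<longrightarrow> hpow h (nj i) ` P i \<inter> hpow h (nj j) ` P j = {}"
      proof (intro allI impI)
        fix i j assume ij: "i \<le> M" "j \<le> M" "i \<noteq> j"
        show "hpow h (nj i) ` P i \<inter> hpow h (nj j) ` P j = {}"
        proof (cases "i div L < m \<and> j div L < m")
          case False then show ?thesis unfolding P_def by auto
        next
          case True
          show ?thesis
          proof (cases "i div L = j div L")
            case False
            have "hpow h (nj i) ` P i \<subseteq> Uc (i div L)" "hpow h (nj j) ` P j \<subseteq> Uc (j div L)"
              unfolding P_def using True by auto
            then show ?thesis using Uc(2) True False by blast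
          next
            case eq: True
            define c where "c = i div L"
            have "i mod L \<noteq> j mod L"
            proof
              assume "i mod L = j mod L"
              moreover have "i div L * L = j div L * L" using eq by simp
              ultimately have "i = j" using div_mult_mod_eq[of i L] div_mult_mod_eq[of j L] by linarith
              then show False using ij(3) by simp
            qed
            then have ne: "nj i \<noteq> nj j" unfolding nj_def by simp
            have "P i \<subseteq> V c" "P j \<subseteq> V c" unfolding P_def c_def using eq by auto
            moreover have "\<forall>j\<in>{1..2*N}. V c \<inter> hpow h (int j) ` V c = {}"
              using V(1) True unfolding c_def by blast
            then have "hpow h (nj i) ` V c \<inter> hpow h (nj j) ` V c = {}"
              by (rule sep_disj[OF bij _ ne njb(2)[of i j]])
            ultimately show ?thesis by blast
          qed
        qed
      qed
    qed
  qed
qed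

end
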